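(* Algorithm $R_A$ (described in the context) is group-strategyproof over the domain of all monotonic profiles (for $n$ agents and alternatives $\{A,B\}$) that admit a unique stable assignment.
   Context: Agents $V=\{v_1,\dots,v_n\}$; two alternatives $A,B$. Each agent $v_i$ has a strict total order $\succ_i$ on $\{A,B\}\times\{1,\dots,n\}$, where $(S,j)$ means being in the community adopting $S$ of size $j$; it is monotonic if $(S,j)\succ_i(S,k)$ whenever $k<j$. An assignment is a map $f:V\to\{A,B\}$; $v_i$ prefers $f$ to $g$ if $(f(v_i),|f^{-1}(f(v_i))|)\succ_i(g(v_i),|g^{-1}(g(v_i))|)$. An assignment $f$ is stable if there is no assignment $f'\neq f$ such that every agent $v_i$ with $f'(v_i)\neq f(v_i)$ prefers $f'$ to $f$. Algorithm $R_A$: set $V_A=V$, $V_B=\emptyset$, $a=|V_A|$, $b=|V_B|$. Repeat: let $k$ be the largest $j\in\{1,\dots,a\}$ with $|\{v_i\in V_A:(B,b+j)\succ_i(A,a)\}|\ge j$, or $k=0$ if none exists. If $k=0$, output $f$ with $f^{-1}(A)=V_A$, $f^{-1}(B)=V_B$. Otherwise let $X=\{v_i\in V_A:(B,b+k)\succ_i(A,a)\}$, move $X$ from $V_A$ to $V_B$, update $a,b$, and repeat. A rule $R$ is group-strategyproof over a domain $D$ of profiles if for every $V\in D$ with $f=R(V)$ there is no nonempty set $U\subseteq V$ of agents who can simultaneously replace their orders by monotonic orders, producing a profile $V'$ with $f'=R(V')$, such that every $v_i\in U$ prefers $f'$ to $f$ according to her true order $\succ_i$. *)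

theory Defs
  imports Main
begin

datatype alt = A | B

type_synonym outcome = "alt \<times> nat"

text \<open>A preference order of an agent: pref x y means x is strictly preferred to y.
  Agents are the elements of a finite type 'v; n = CARD('v).\<close>
type_synonym pref = "outcome \<Rightarrow> outcome \<Rightarrow> bool"

definition outcomes :: "nat \<Rightarrow> outcome set" where
  "outcomes n = UNIV \<times> {1..n}"

definition strict_total_order_on :: "outcome set \<Rightarrow> pref \<Rightarrow> bool" where
  "strict_total_order_on X r \<longleftrightarrow>
     (\<forall>x\<in>X. \<not> r x x) \<and>
     (\<forall>x\<in>X. \<forall>y\<in>X. \<forall>z\<in>X. r x y \<and> r y z \<longrightarrow> r x z) \<and>
     (\<forall>x\<in>X. \<forall>y\<in>X. x \<noteq> y \<longrightarrow> r x y \<or> r y x)"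

definition monotonic :: "nat \<Rightarrow> pref \<Rightarrow> bool" where
  "monotonic n r \<longleftrightarrow> (\<forall>S j k. k < j \<and> 1 \<le> k \<and> j \<le> n \<longrightarrow> r (S, j) (S, k))"

definition is_profile :: "('v::finite \<Rightarrow> pref) \<Rightarrow> bool" where
  "is_profile P \<longleftrightarrow> (\<forall>v. strict_total_order_on (outcomes (card (UNIV::'v set))) (P v))"

definition monotonic_profile :: "('v::finite \<Rightarrow> pref) \<Rightarrow> bool" where
  "monotonic_profile P \<longleftrightarrow> is_profile P \<and> (\<forall>v. monotonic (card (UNIV::'v set)) (P v))"

definition outcome_of :: "('v::finite \<Rightarrow> alt) \<Rightarrow> 'v \<Rightarrow> outcome" where
  "outcome_of f v = (f v, card {w. f w = f v})"

definition prefers :: "pref \<Rightarrow> 'v::finite \<Rightarrow> ('v \<Rightarrow> alt) \<Rightarrow> ('v \<Rightarrow> alt) \<Rightarrow> bool" where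
  "prefers r v f g \<longleftrightarrow> r (outcome_of f v) (outcome_of g v)"

definition stable :: "('v::finite \<Rightarrow> pref) \<Rightarrow> ('v \<Rightarrow> alt) \<Rightarrow> bool" where
  "stable P f \<longleftrightarrow>
     \<not> (\<exists>f'. f' \<noteq> f \<and> (\<forall>v. f' v \<noteq> f v \<longrightarrow> prefers (P v) v f' f))"

definition unique_stable :: "('v::finite \<Rightarrow> pref) \<Rightarrow> bool" where
  "unique_stable P \<longleftrightarrow> (\<exists>!f. stable P f)"

text \<open>One round of algorithm R_A, acting on the current set V_A (V_B is its complement).\<close>
definition RA_k :: "('v::finite \<Rightarrow> pref) \<Rightarrow> 'v set \<Rightarrow> nat" where
  "RA_k P VA = (let a = card VA; b = card (UNIV - VA) in
     Max ({j \<in> {1..a}. j \<le> card {v \<in> VA. P v (B, b + j) (A, a)}} \<union> {0}))"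

definition RA_step :: "('v::finite \<Rightarrow> pref) \<Rightarrow> 'v set \<Rightarrow> 'v set" where
  "RA_step P VA = (let a = card VA; b = card (UNIV - VA); k = RA_k P VA in
     if k = 0 then VA else VA - {v \<in> VA. P v (B, b + k) (A, a)})"

text \<open>Each non-terminating round removes at least one agent from V_A, so after
  CARD('v) rounds the loop has reached its fixed point (k = 0).\<close>
definition RA :: "('v::finite \<Rightarrow> pref) \<Rightarrow> ('v \<Rightarrow> alt)" where
  "RA P = (let VA = (RA_step P ^^ card (UNIV::'v set)) UNIV in (\<lambda>v. if v \<in> VA then A else B))"

definition group_strategyproof_on ::
  "(('v::finite \<Rightarrow> pref) \<Rightarrow> ('v \<Rightarrow> alt)) \<Rightarrow> ('v \<Rightarrow> pref) set \<Rightarrow> bool" where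
  "group_strategyproof_on R D \<longleftrightarrow>
     (\<forall>P\<in>D. \<not> (\<exists>U P'. U \<noteq> {} \<and>
        (\<forall>v. v \<notin> U \<longrightarrow> P' v = P v) \<and>
        (\<forall>v\<in>U. strict_total_order_on (outcomes (card (UNIV::'v set))) (P' v) \<and> monotonic (card (UNIV::'v set)) (P' v)) \<and>
        (\<forall>v\<in>U. prefers (P v) v (R P') (R P))))"

end

theory Submission
  imports Defs
begin

definition good :: "nat \<Rightarrow> pref \<Rightarrow> bool" where
  "good N r \<longleftrightarrow> strict_total_order_on (outcomes N) r \<and> monotonic N r"

lemma good_irrefl:
  assumes "good N r" "1 \<le> x" "x \<le> N" shows "\<not> r (S,x) (S,x)"
  using assms unfolding good_def strict_total_order_on_def outcomes_def by auto

lemma good_trans: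
  assumes "good N r" "r x y" "r y z" "x \<in> outcomes N" "y \<in> outcomes N" "z \<in> outcomes N"
  shows "r x z"
  using assms unfolding good_def strict_total_order_on_def by blast

lemma mono_trans:
  assumes g: "good N r" and h: "r (S,y) (T,j)"
    and "1 \<le> y" "y \<le> x" "x \<le> N" "1 \<le> i" "i \<le> j" "j \<le> N"
  shows "r (S,x) (T,i)"
proof -
  have o: "(S,x) \<in> outcomes N" "(S,y) \<in> outcomes N" "(T,i) \<in> outcomes N" "(T,j) \<in> outcomes N"
    using assms by (auto simp: outcomes_def)
  have m: "monotonic N r" using g by (simp add: good_def)
  have h1: "r (S,x) (T,j)"
  proof (cases "x = y")
    case True then show ?thesis using h by simp
  next
    case False
    then have "r (S,x) (S,y)" using m assms unfolding monotonic_def by auto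
    then show ?thesis using good_trans[OF g _ h] o by blast
  qed
  show ?thesis
  proof (cases "i = j")
    case True then show ?thesis using h1 by simp
  next
    case False
    then have "r (T,j) (T,i)" using m assms unfolding monotonic_def by auto
    then show ?thesis using good_trans[OF g h1] o by blast
  qed
qed

lemma no_cycle:
  assumes g: "good N r" and h1: "r (S,p) (T,s)" and h2: "r (T,w) (S,q)"
    and "1 \<le> p" "p \<le> q" "q \<le> N" "1 \<le> w" "w \<le> s" "s \<le> N"
  shows False
proof -
  have "r (S,q) (T,w)" using mono_trans[OF g h1] assms by auto
  then have "r (S,q) (S,q)" using good_trans[OF g _ h2] assms by (auto simp: outcomes_def)
  then show False using good_irrefl[OF g] assms by auto
qed

lemma card_compl: "card (- (S::'v::finite set)) = card (UNIV::'v set) - card S"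
  by (metis Compl_eq_Diff_UNIV card_Diff_subset finite subset_UNIV)

lemma card_UNIV_minus: "card (UNIV - (S::'v::finite set)) = card (UNIV::'v set) - card S"
  by (metis card_Diff_subset finite subset_UNIV)

lemma card_le_N: "card (S::'v::finite set) \<le> card (UNIV::'v set)"
  by (simp add: card_mono)

definition SA :: "('v::finite \<Rightarrow> pref) \<Rightarrow> 'v set \<Rightarrow> bool" where
  "SA P S \<longleftrightarrow> (\<forall>Z. Z \<subseteq> S \<longrightarrow> Z \<noteq> {} \<longrightarrow>
     (\<exists>v\<in>Z. \<not> P v (B, card (UNIV::'v set) - card S + card Z) (A, card S)))"

definition SB :: "('v::finite \<Rightarrow> pref) \<Rightarrow> 'v set \<Rightarrow> bool" where
  "SB P S \<longleftrightarrow> (\<forall>Y. Y \<subseteq> - S \<longrightarrow> Y \<noteq> {} \<longrightarrow>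
     (\<exists>v\<in>Y. \<not> P v (A, card S + card Y) (B, card (UNIV::'v set) - card S)))"

lemma RA_k_props:
  assumes "RA_k P S \<noteq> 0"
  shows "1 \<le> RA_k P S \<and> RA_k P S \<le> card S \<and>
    RA_k P S \<le> card {v\<in>S. P v (B, card (UNIV - S) + RA_k P S) (A, card S)}"
proof -
  define M where "M = {j \<in> {1..card S}. j \<le> card {v \<in> S. P v (B, card (UNIV - S) + j) (A, card S)}} \<union> {0}"
  have k: "RA_k P S = Max M" unfolding RA_k_def M_def Let_def by simp
  have "finite M" unfolding M_def by auto
  moreover have "M \<noteq> {}" unfolding M_def by auto
  ultimately have "Max M \<in> M" by (rule Max_in)
  with assms k show ?thesis unfolding M_def by auto
qed

lemma RA_k_zero:
  assumes "RA_k P S = 0" shows "SA P S"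
  unfolding SA_def
proof (intro allI impI, rule ccontr)
  fix Z assume Z: "Z \<subseteq> S" "Z \<noteq> {}"
    and nz: "\<not> (\<exists>v\<in>Z. \<not> P v (B, card (UNIV::'a set) - card S + card Z) (A, card S))"
  define M where "M = {j \<in> {1..card S}. j \<le> card {v \<in> S. P v (B, card (UNIV - S) + j) (A, card S)}} \<union> {0}"
  have k: "RA_k P S = Max M" unfolding RA_k_def M_def Let_def by simp
  have fin: "finite M" unfolding M_def by auto
  have cz: "1 \<le> card Z" "card Z \<le> card S" using Z by (auto simp: card_mono card_gt_0_iff Suc_le_eq)
  have "Z \<subseteq> {v \<in> S. P v (B, card (UNIV - S) + card Z) (A, card S)}"
    using Z nz by (auto simp: card_UNIV_minus)
  then have "card Z \<le> card {v \<in> S. P v (B, card (UNIV - S) + card Z) (A, card S)}"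
    by (simp add: card_mono)
  then have "card Z \<in> M" using cz unfolding M_def by auto
  then have "card Z \<le> Max M" using fin by simp
  then show False using assms k cz by simp
qed

lemma RA_step_cases:
  "RA_k P S = 0 \<and> RA_step P S = S \<or>
   (RA_k P S \<noteq> 0 \<and> RA_step P S = S - {v\<in>S. P v (B, card (UNIV - S) + RA_k P S) (A, card S)})"
  unfolding RA_step_def Let_def by auto

lemma RA_step_psubset:
  assumes "RA_k P S \<noteq> 0" shows "RA_step P S \<subset> S"
proof -
  let ?X = "{v\<in>S. P v (B, card (UNIV - S) + RA_k P S) (A, card S)}"
  have "1 \<le> card ?X" using RA_k_props[OF assms] by linarith
  then have "?X \<noteq> {}" by (metis card.empty not_one_le_zero)
  moreover have "RA_step P S = S - ?X" using RA_step_cases[of P S] assms by auto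
  ultimately show ?thesis by auto
qed

definition FA :: "('v::finite \<Rightarrow> pref) \<Rightarrow> 'v set" where
  "FA P = (RA_step P ^^ card (UNIV::'v set)) UNIV"

lemma FA_aux:
  "RA_k P ((RA_step P ^^ i) UNIV) = 0 \<or> card ((RA_step P ^^ i) (UNIV::'v::finite set)) + i \<le> card (UNIV::'v set)"
proof (induction i)
  case 0 then show ?case by simp
next
  case (Suc i)
  let ?S = "(RA_step P ^^ i) (UNIV::'v set)"
  show ?case
  proof (cases "RA_k P ?S = 0")
    case True
    then have "RA_step P ?S = ?S" using RA_step_cases[of P ?S] by auto
    then show ?thesis using True by simp
  next
    case False
    then have "card ?S + i \<le> card (UNIV::'v set)" using Suc by auto
    moreover have "card (RA_step P ?S) < card ?S"
      using RA_step_psubset[OF False] by (simp add: psubset_card_mono)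
    ultimately show ?thesis by simp
  qed
qed

lemma FA_k: "RA_k P (FA P) = 0"
proof -
  have "RA_k P (FA P) = 0 \<or> card (FA P) = 0"
    using FA_aux[of P "card (UNIV::'a set)"] unfolding FA_def by auto
  then show ?thesis
  proof
    assume "card (FA P) = 0"
    then show ?thesis unfolding RA_k_def Let_def by simp
  qed
qed

lemma FA_SA: "SA P (FA P)" using RA_k_zero[OF FA_k] .

lemma SB_step:
  fixes P :: "'v::finite \<Rightarrow> pref"
  assumes g: "\<forall>v. good (card (UNIV::'v set)) (P v)" and sb: "SB P S"
  shows "SB P (RA_step P S)"
proof (cases "RA_k P S = 0")
  case True
  then show ?thesis using sb RA_step_cases[of P S] by auto
next
  case False
  define N where "N = card (UNIV::'v set)"
  define k where "k = RA_k P S"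
  define X where "X = {v\<in>S. P v (B, card (UNIV - S) + k) (A, card S)}"
  have kp: "1 \<le> k" "k \<le> card S" "k \<le> card X"
    using RA_k_props[OF False] unfolding k_def X_def by auto
  have S': "RA_step P S = S - X" using RA_step_cases[of P S] False unfolding X_def k_def by auto
  have XS: "X \<subseteq> S" unfolding X_def by auto
  have cS': "card (S - X) = card S - card X" using XS by (simp add: card_Diff_subset)
  have cXS: "card X \<le> card S" using XS by (simp add: card_mono)
  have cSN: "card S \<le> N" unfolding N_def by (rule card_le_N)
  show ?thesis unfolding SB_def S'
  proof (intro allI impI, rule ccontr)
    fix Y assume Y: "Y \<subseteq> - (S - X)" "Y \<noteq> {}"
      and nz: "\<not> (\<exists>v\<in>Y. \<not> P v (A, card (S - X) + card Y) (B, card (UNIV::'v set) - card (S - X)))"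
    have all: "\<And>v. v \<in> Y \<Longrightarrow> P v (A, card S - card X + card Y) (B, N - (card S - card X))"
      using nz cS' unfolding N_def by auto
    define Y0 where "Y0 = Y - X"
    define Y1 where "Y1 = Y \<inter> X"
    have cY: "card Y = card Y0 + card Y1" unfolding Y0_def Y1_def
      using card_Int_Diff[of Y X] by simp
    have cY1: "card Y1 \<le> card X" unfolding Y1_def by (simp add: card_mono)
    have cY1': "1 \<le> card Y" using Y by (simp add: card_gt_0_iff Suc_le_eq)
    show False
    proof (cases "Y0 = {}")
      case False
      have Y0S: "Y0 \<subseteq> - S" using Y unfolding Y0_def by auto
      then have "card Y0 \<le> card (- S)" by (simp add: card_mono)
      then have cY0: "card Y0 \<le> N - card S" using card_compl[of S] unfolding N_def by simp
      have cY0': "1 \<le> card Y0" using False by (simp add: card_gt_0_iff Suc_le_eq)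
      obtain v where v: "v \<in> Y0" "\<not> P v (A, card S + card Y0) (B, N - card S)"
        using sb Y0S False unfolding SB_def N_def by blast
      have "P v (A, card S - card X + card Y) (B, N - (card S - card X))"
        using all v(1) unfolding Y0_def by auto
      then have "P v (A, card S + card Y0) (B, N - card S)"
        by (rule mono_trans[OF g[rule_format, folded N_def]]) (use cY cY1 cXS cSN cY0 cY0' cY1' in linarith)+
      then show False using v by simp
    next
      case True
      then have YX: "Y \<subseteq> X" unfolding Y0_def by auto
      then have cYX: "card Y \<le> card X" by (simp add: card_mono)
      obtain v where v: "v \<in> Y" using Y by auto
      then have h1: "P v (B, card (UNIV - S) + k) (A, card S)" using YX unfolding X_def by auto
      then have h1': "P v (B, N - card S + k) (A, card S)" using card_UNIV_minus[of S] unfolding N_def by simp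
      have h2: "P v (A, card S - card X + card Y) (B, N - (card S - card X))" using all v by auto
      show False
        by (rule no_cycle[OF g[rule_format, folded N_def] h1' h2]) (use kp cYX cXS cSN cY1' in linarith)+
    qed
  qed
qed

lemma SA_max_step:
  fixes P :: "'v::finite \<Rightarrow> pref"
  assumes g: "\<forall>v. good (card (UNIV::'v set)) (P v)" and sa: "SA P H" and HS: "H \<subseteq> S"
  shows "H \<subseteq> RA_step P S"
proof (cases "RA_k P S = 0")
  case True
  then show ?thesis using HS RA_step_cases[of P S] by auto
next
  case False
  define N where "N = card (UNIV::'v set)"
  define k where "k = RA_k P S"
  define X where "X = {v\<in>S. P v (B, card (UNIV - S) + k) (A, card S)}"
  have kp: "1 \<le> k" "k \<le> card S" "k \<le> card X"
    using RA_k_props[OF False] unfolding k_def X_def by auto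
  have S': "RA_step P S = S - X" using RA_step_cases[of P S] False unfolding X_def k_def by auto
  have XS: "X \<subseteq> S" unfolding X_def by auto
  have cSN: "card S \<le> N" unfolding N_def by (rule card_le_N)
  show ?thesis
  proof (rule ccontr)
    assume "\<not> H \<subseteq> RA_step P S"
    then have Zne: "X \<inter> H \<noteq> {}" using HS S' by auto
    define Z where "Z = X \<inter> H"
    have cX: "card X = card (X - H) + card Z" unfolding Z_def
      using card_Int_Diff[of X H] by simp
    have "H \<subseteq> S - (X - H)" using HS by auto
    then have "card H \<le> card (S - (X - H))" by (simp add: card_mono)
    also have "\<dots> = card S - card (X - H)" using XS by (subst card_Diff_subset) auto
    finally have cH: "card H \<le> card S - card (X - H)" .
    have cXH: "card (X - H) \<le> card S" using card_mono[of S "X - H"] XS by auto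
    have cZH: "card Z \<le> card H" unfolding Z_def by (simp add: card_mono)
    have cZ1: "1 \<le> card Z" using Zne unfolding Z_def by (simp add: card_gt_0_iff Suc_le_eq)
    obtain v where v: "v \<in> Z" "\<not> P v (B, N - card H + card Z) (A, card H)"
      using sa Zne unfolding SA_def Z_def N_def by blast
    have "P v (B, card (UNIV - S) + k) (A, card S)" using v(1) unfolding Z_def X_def by auto
    then have "P v (B, N - card S + k) (A, card S)" using card_UNIV_minus[of S] unfolding N_def by simp
    then have "P v (B, N - card H + card Z) (A, card H)"
      by (rule mono_trans[OF g[rule_format, folded N_def]]) (use kp cX cH cXH cZH cZ1 cSN in linarith)+
    then show False using v by simp
  qed
qed

lemma FA_inv:
  fixes P :: "'v::finite \<Rightarrow> pref"
  assumes g: "\<forall>v. good (card (UNIV::'v set)) (P v)"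
  shows "SB P ((RA_step P ^^ i) UNIV) \<and> (\<forall>H. SA P H \<longrightarrow> H \<subseteq> (RA_step P ^^ i) UNIV)"
proof (induction i)
  case 0 then show ?case by (simp add: SB_def)
next
  case (Suc i)
  then show ?case using SB_step[OF g] SA_max_step[OF g] by auto
qed

lemma FA_SB:
  fixes P :: "'v::finite \<Rightarrow> pref"
  assumes g: "\<forall>v. good (card (UNIV::'v set)) (P v)"
  shows "SB P (FA P)" using FA_inv[OF g] unfolding FA_def by blast

lemma FA_max:
  fixes P :: "'v::finite \<Rightarrow> pref"
  assumes g: "\<forall>v. good (card (UNIV::'v set)) (P v)" and "SA P H"
  shows "H \<subseteq> FA P" using FA_inv[OF g] assms(2) unfolding FA_def by blast

lemma outcome_ind:
  "outcome_of (\<lambda>v. if v \<in> S then A else B) (v::'v::finite) =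
     (if v \<in> S then (A, card S) else (B, card (UNIV::'v set) - card S))"
proof (cases "v \<in> S")
  case True
  have "{w. (if w \<in> S then A else B) = A} = S" by auto
  then show ?thesis using True unfolding outcome_of_def by simp
next
  case False
  have "{w. (if w \<in> S then A else B) = B} = - S" by auto
  then show ?thesis using False card_compl[of S] unfolding outcome_of_def by simp
qed

lemma RA_FA: "RA P = (\<lambda>v. if v \<in> FA P then A else B)"
  unfolding RA_def FA_def Let_def by simp

lemma stable_SA_SB:
  fixes P :: "'v::finite \<Rightarrow> pref"
  assumes g: "\<forall>v. good (card (UNIV::'v set)) (P v)" and sa: "SA P S" and sb: "SB P S"
  shows "stable P (\<lambda>v. if v \<in> S then A else B)"
  unfolding stable_def
proof (rule notI, elim exE conjE)
  define N where "N = card (UNIV::'v set)"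
  define f where "f = (\<lambda>v. if v \<in> S then A else B)"
  fix f' :: "'v \<Rightarrow> alt"
  assume ne: "f' \<noteq> (\<lambda>v. if v \<in> S then A else B)"
    and mv: "\<forall>v. f' v \<noteq> (if v \<in> S then A else B) \<longrightarrow> prefers (P v) v f' (\<lambda>v. if v \<in> S then A else B)"
  define XA where "XA = {v\<in>S. f' v = B}"
  define XB where "XB = {v\<in>-S. f' v = A}"
  have eqA: "{w. f' w = A} = (S - XA) \<union> XB" unfolding XA_def XB_def
    by auto (metis alt.exhaust)
  have eqB: "{w. f' w = B} = - {w. f' w = A}" by (auto, metis alt.exhaust) 
  have cSN: "card S \<le> N" unfolding N_def by (rule card_le_N)
  have cXA: "card XA \<le> card S" unfolding XA_def by (simp add: card_mono)
  have cXB: "card XB \<le> N - card S" using card_compl[of S] card_mono[of "-S" XB] unfolding XB_def N_def by auto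
  have cA: "card {w. f' w = A} = card S - card XA + card XB"
    unfolding eqA
    by (subst card_Un_disjoint) (auto simp: XA_def XB_def card_Diff_subset)
  have cB: "card {w. f' w = B} = N - (card S - card XA + card XB)"
    unfolding eqB card_compl cA N_def ..
  have prA: "P v (B, N - (card S - card XA + card XB)) (A, card S)" if "v \<in> XA" for v
  proof -
    have "v \<in> S" "f' v = B" using that unfolding XA_def by auto
    then have "prefers (P v) v f' (\<lambda>v. if v \<in> S then A else B)" using mv by auto
    then show ?thesis using \<open>v \<in> S\<close> \<open>f' v = B\<close> cB
      unfolding prefers_def outcome_ind by (simp add: outcome_of_def)
  qed
  have prB: "P v (A, card S - card XA + card XB) (B, N - card S)" if "v \<in> XB" for v
  proof -
    have "v \<notin> S" "f' v = A" using that unfolding XB_def by auto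
    then have "prefers (P v) v f' (\<lambda>v. if v \<in> S then A else B)" using mv by auto
    then show ?thesis using \<open>v \<notin> S\<close> \<open>f' v = A\<close> cA
      unfolding prefers_def outcome_ind N_def by (simp add: outcome_of_def)
  qed
  consider "card XB < card XA" | "card XA < card XB" | "card XA = card XB" by linarith
  then show False
  proof cases
    case 1
    obtain Z where Z: "Z \<subseteq> XA" "card Z = card XA - card XB"
      using obtain_subset_with_card_n[of "card XA - card XB" XA] by auto
    have "Z \<noteq> {}" using Z 1 by auto
    moreover have "Z \<subseteq> S" using Z unfolding XA_def by auto
    ultimately obtain v where v: "v \<in> Z" "\<not> P v (B, N - card S + card Z) (A, card S)"
      using sa unfolding SA_def N_def by blast
    have "N - (card S - card XA + card XB) = N - card S + card Z" using Z 1 cSN cXA cXB by linarith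
    then show False using prA[of v] v Z by auto
  next
    case 2
    obtain Y where Y: "Y \<subseteq> XB" "card Y = card XB - card XA"
      using obtain_subset_with_card_n[of "card XB - card XA" XB] by auto
    have "Y \<noteq> {}" using Y 2 by auto
    moreover have "Y \<subseteq> - S" using Y unfolding XB_def by auto
    ultimately obtain v where v: "v \<in> Y" "\<not> P v (A, card S + card Y) (B, N - card S)"
      using sb unfolding SB_def N_def by blast
    have "card S - card XA + card XB = card S + card Y" using Y 2 cSN cXA cXB by linarith
    then show False using prB[of v] v Y by auto
  next
    case 3
    show False
    proof (cases "XA = {}")
      case True
      then have "XB = {}" using 3 by simp
      then have "f' = (\<lambda>v. if v \<in> S then A else B)" using True unfolding XA_def XB_def
        by (auto intro!: ext) (metis alt.exhaust)+
      then show False using ne by simp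
    next
      case False
      then obtain v where v: "v \<in> XA" by auto
      have "XB \<noteq> {}" using 3 False by auto
      then have "1 \<le> card XB" by (simp add: card_gt_0_iff Suc_le_eq)
      then have c1: "1 \<le> N - card S" using cXB by linarith
      have c2: "1 \<le> card S" using v cXA by (metis False card_gt_0_iff finite le_trans less_eq_Suc_le One_nat_def)
      have "{v} \<subseteq> S" "{v} \<noteq> {}" using v unfolding XA_def by auto
      then obtain w where w: "w \<in> {v}" "\<not> P w (B, N - card S + card {v}) (A, card S)"
        using sa unfolding SA_def N_def by blast
      have "P v (B, N - card S) (A, card S)" using prA[OF v] 3 cXA by simp
      then have "P v (B, N - card S + 1) (A, card S)"
        by (rule mono_trans[OF g[rule_format, folded N_def]]) (use c1 c2 cSN in linarith)+
      then show False using w by simp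
    qed
  qed
qed

lemma key:
  fixes P P' :: "'v::finite \<Rightarrow> pref"
  assumes gP: "\<forall>v. good (card (UNIV::'v set)) (P v)"
    and gP': "\<forall>v. good (card (UNIV::'v set)) (P' v)"
    and same: "\<forall>v. v \<notin> U \<longrightarrow> P' v = P v"
    and gain: "\<forall>u\<in>U. prefers (P u) u (RA P') (RA P)"
  shows "SA P (FA P') \<and> SB P (FA P')"
proof -
  define N where "N = card (UNIV::'v set)"
  define V where "V = FA P"
  define W where "W = FA P'"
  have g: "good N (P v)" for v using gP unfolding N_def by auto
  have gn: "P u (if u \<in> W then (A, card W) else (B, N - card W))
                (if u \<in> V then (A, card V) else (B, N - card V))" if "u \<in> U" for u
    using gain that unfolding RA_FA prefers_def outcome_ind V_def W_def N_def by auto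
  have saV: "SA P V" and sbV: "SB P V" unfolding V_def using FA_SA FA_SB[OF gP] by auto
  have saW: "SA P' W" and sbW: "SB P' W" unfolding W_def using FA_SA FA_SB[OF gP'] by auto
  have cVN: "card V \<le> N" "card W \<le> N" unfolding N_def by (rule card_le_N)+
  have "SA P (V \<union> W)"
    unfolding SA_def
  proof (intro allI impI, rule ccontr)
    fix Z assume Z: "Z \<subseteq> V \<union> W" "Z \<noteq> {}"
      and nz: "\<not> (\<exists>v\<in>Z. \<not> P v (B, card (UNIV::'v set) - card (V \<union> W) + card Z) (A, card (V \<union> W)))"
    define s where "s = card (V \<union> W)"
    have all: "P v (B, N - s + card Z) (A, s)" if "v \<in> Z" for v
      using nz that unfolding s_def N_def by auto
    have cs: "s = card V + card (W - V)" unfolding s_def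
      using card_Un_disjoint[of V "W - V"] by simp
    have csN: "s \<le> N" unfolding N_def s_def by (rule card_le_N)
    have cZ: "card Z = card (Z \<inter> V) + card (Z - V)" using card_Int_Diff[of Z V] by simp
    have cZW: "card (Z - V) \<le> card (W - V)" using Z by (intro card_mono) auto
    have cZ1: "1 \<le> card Z" using Z by (simp add: card_gt_0_iff Suc_le_eq)
    have cWs: "card W \<le> s" unfolding s_def by (simp add: card_mono)
    show False
    proof (cases "Z \<inter> V = {}")
      case False
      have "Z \<inter> V \<subseteq> V" by auto
      then obtain v where v: "v \<in> Z \<inter> V" "\<not> P v (B, N - card V + card (Z \<inter> V)) (A, card V)"
        using saV False unfolding SA_def N_def by blast
      have c1: "1 \<le> card (Z \<inter> V)" using False by (simp add: card_gt_0_iff Suc_le_eq)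
      have c2: "card (Z \<inter> V) \<le> card V" by (simp add: card_mono)
      have "P v (B, N - card V + card (Z \<inter> V)) (A, card V)"
        using v(1) by - (rule mono_trans[OF g all], simp, (use cs csN cZ cZW cZ1 c1 c2 cVN in linarith)+)
      then show False using v by simp
    next
      case True
      then have ZWV: "Z \<subseteq> W - V" using Z by auto
      show False
      proof (cases "Z \<inter> U = {}")
        case False
        then obtain u where u: "u \<in> Z" "u \<in> U" by auto
        then have uW: "u \<in> W" "u \<notin> V" using ZWV by auto
        then have h2: "P u (A, card W) (B, N - card V)" using gn[OF u(2)] by simp
        have cW1: "1 \<le> card W" using uW card_gt_0_iff[of W] by (cases "W = {}") auto
        show False
          by (rule no_cycle[OF g all[OF u(1)] h2]) (use cs csN cZ cZW cZ1 cW1 cWs cVN True in simp_all)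
      next
        case True
        have "Z \<subseteq> W" using ZWV by auto
        then obtain v where v: "v \<in> Z" "\<not> P' v (B, N - card W + card Z) (A, card W)"
          using saW Z(2) unfolding SA_def N_def by blast
        have PP: "P' v = P v" using same v(1) True by auto
        have cZW': "card Z \<le> card W" using \<open>Z \<subseteq> W\<close> by (simp add: card_mono)
        have cW1: "1 \<le> card W" using cZ1 cZW' by linarith
        have "P v (B, N - card W + card Z) (A, card W)"
          using all[OF v(1)]
          by (rule mono_trans[OF g]) (use csN cZ1 cWs cZW' cW1 in linarith)+
        then show False using v PP by simp
      qed
    qed
  qed
  then have "V \<union> W \<subseteq> V" using FA_max[OF gP] unfolding V_def by blast
  then have WV: "W \<subseteq> V" by auto
  have UW: "u \<notin> W" if "u \<in> U" for u
  proof
    assume uW: "u \<in> W"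
    then have "u \<in> V" using WV by auto
    then have h: "P u (A, card W) (A, card V)" using gn[OF that] uW by simp
    have cW1: "1 \<le> card W" using uW card_gt_0_iff[of W] by (cases "W = {}") auto
    have cWV: "card W \<le> card V" using WV by (simp add: card_mono)
    show False by (rule no_cycle[OF g h h]) (use cW1 cVN cWV in linarith)+
  qed
  have "SA P W"
    unfolding SA_def
  proof (intro allI impI)
    fix Z assume Z: "Z \<subseteq> W" "Z \<noteq> {}"
    then obtain v where v: "v \<in> Z" "\<not> P' v (B, card (UNIV::'v set) - card W + card Z) (A, card W)"
      using saW unfolding SA_def by blast
    then have "v \<notin> U" using UW Z by auto
    then show "\<exists>v\<in>Z. \<not> P v (B, card (UNIV::'v set) - card W + card Z) (A, card W)"
      using v same by auto
  qed
  moreover have "SB P W"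
    unfolding SB_def
  proof (intro allI impI, rule ccontr)
    fix Y assume Y: "Y \<subseteq> - W" "Y \<noteq> {}"
      and nz: "\<not> (\<exists>v\<in>Y. \<not> P v (A, card W + card Y) (B, card (UNIV::'v set) - card W))"
    have all: "P v (A, card W + card Y) (B, N - card W)" if "v \<in> Y" for v
      using nz that unfolding N_def by auto
    have cY: "card Y = card (Y \<inter> V) + card (Y - V)" using card_Int_Diff[of Y V] by simp
    have cVW: "card (V - W) = card V - card W" using WV by (simp add: card_Diff_subset)
    have cYV: "card (Y \<inter> V) \<le> card (V - W)" using Y by (intro card_mono) auto
    have cY1: "1 \<le> card Y" using Y by (simp add: card_gt_0_iff Suc_le_eq)
    have cWV: "card W \<le> card V" using WV by (simp add: card_mono)
    show False
    proof (cases "Y - V = {}")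
      case False
      have Y0: "Y - V \<subseteq> - V" by auto
      then obtain v where v: "v \<in> Y - V" "\<not> P v (A, card V + card (Y - V)) (B, N - card V)"
        using sbV False unfolding SB_def N_def by blast
      have "card (Y - V) \<le> card (- V)" using Y0 by (simp add: card_mono)
      then have c0: "card (Y - V) \<le> N - card V" using card_compl[of V] unfolding N_def by simp
      have c1: "1 \<le> card (Y - V)" using False by (simp add: card_gt_0_iff Suc_le_eq)
      have "P v (A, card V + card (Y - V)) (B, N - card V)"
        using v(1) by - (rule mono_trans[OF g all], simp, (use cY cVW cYV cY1 cWV c0 c1 cVN in linarith)+)
      then show False using v by simp
    next
      case True
      then have YV: "Y \<subseteq> V" by auto
      show False
      proof (cases "Y \<inter> U = {}")
        case False
        then obtain u where u: "u \<in> Y" "u \<in> U" by auto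
        then have uW: "u \<notin> W" "u \<in> V" using Y YV by auto
        then have h1: "P u (B, N - card W) (A, card V)" using gn[OF u(2)] by simp
        have "card W < N" using uW unfolding N_def
          by (intro psubset_card_mono) auto
        show False
          by (rule no_cycle[OF g h1 all[OF u(1)]]) (use cY cVW cYV cY1 cWV cVN True \<open>card W < N\<close> in simp_all)
      next
        case True
        obtain v where v: "v \<in> Y" "\<not> P' v (A, card W + card Y) (B, N - card W)"
          using sbW Y unfolding SB_def N_def by blast
        have PP: "P' v = P v" using same v(1) True by auto
        show False using v all[OF v(1)] PP by simp
      qed
    qed
  qed
  ultimately show ?thesis unfolding W_def by simp
qed

lemma outcome_irrefl:
  fixes P :: "'v::finite \<Rightarrow> pref"
  assumes g: "good (card (UNIV::'v set)) r"
  shows "\<not> r (outcome_of (RA P) u) (outcome_of (RA P) u)"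
proof (cases "u \<in> FA P")
  case True
  then have "FA P \<noteq> {}" by auto
  then have "1 \<le> card (FA P)" by (simp add: card_gt_0_iff Suc_le_eq)
  then show ?thesis using True good_irrefl[OF g, of "card (FA P)" A] card_le_N[of "FA P"]
    unfolding RA_FA outcome_ind by simp
next
  case False
  then have "card (FA P) < card (UNIV::'v set)" by (intro psubset_card_mono) auto
  then show ?thesis using False good_irrefl[OF g, of "card (UNIV::'v set) - card (FA P)" B]
    unfolding RA_FA outcome_ind by simp
qed

theorem theorem4:
  shows "group_strategyproof_on (RA :: ('v::finite \<Rightarrow> pref) \<Rightarrow> ('v \<Rightarrow> alt))
           {P. monotonic_profile P \<and> unique_stable P}"
  unfolding group_strategyproof_on_def
proof (intro ballI notI, elim exE conjE)
  fix P :: "'v \<Rightarrow> pref" and U P'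
  assume PD: "P \<in> {P. monotonic_profile P \<and> unique_stable P}"
    and Une: "U \<noteq> {}" and same: "\<forall>v. v \<notin> U \<longrightarrow> P' v = P v"
    and gU: "\<forall>v\<in>U. strict_total_order_on (outcomes (card (UNIV::'v set))) (P' v) \<and> monotonic (card (UNIV::'v set)) (P' v)"
    and gain: "\<forall>v\<in>U. prefers (P v) v (RA P') (RA P)"
  have gP: "\<forall>v. good (card (UNIV::'v set)) (P v)"
    using PD unfolding monotonic_profile_def is_profile_def good_def by auto
  have gP': "\<forall>v. good (card (UNIV::'v set)) (P' v)"
  proof
    fix v show "good (card (UNIV::'v set)) (P' v)"
      using gU gP same unfolding good_def by (cases "v \<in> U") auto
  qed
  have k: "SA P (FA P') \<and> SB P (FA P')" using key[OF gP gP' same gain] .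
  have s1: "stable P (RA P')" unfolding RA_FA using stable_SA_SB[OF gP] k by auto
  have s2: "stable P (RA P)" unfolding RA_FA using stable_SA_SB[OF gP FA_SA FA_SB[OF gP]] .
  have "unique_stable P" using PD by auto
  then have eq: "RA P' = RA P" using s1 s2 unfolding unique_stable_def by blast
  obtain u where u: "u \<in> U" using Une by auto
  have "prefers (P u) u (RA P) (RA P)" using gain u eq by auto
  then show False using outcome_irrefl[of "P u" P u] gP unfolding prefers_def by auto
qed

end
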